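(* Let $\mathcal{H}$ be an infinite-dimensional separable Hilbert space with orthonormal bases $\{e_n\}$, $\{f_n\}$, $\mathcal{D}_e=\mathrm{span}\{e_n\}$, $\mathcal{D}_f=\mathrm{span}\{f_n\}$, $\mathcal{D}_e^2=\mathrm{span}\{|e_k\rangle\langle e_\ell|\}$. Let $\mathcal{Q}$ be a completely positive map from $\mathcal{D}_e^2$ into sesquilinear forms on $\mathcal{D}_f$ represented as $\mathcal{Q}(\rho)=\sum_\alpha K_\alpha\rho K_\alpha^\dagger$ by a countable family of generalized operators $K_\alpha$. If $\mathcal{Q}$ maps $\mathcal{D}_e^2$ into $\mathcal{B}(\mathcal{H})$ (i.e. each form $\mathcal{Q}(\rho)$ is given on $\mathcal{D}_f$ by a bounded operator), then each $K_\alpha$ maps $\mathcal{D}_e$ into $\mathcal{H}$.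
   Context: A generalized operator $K$ is a linear map from $\mathcal{D}_e$ into the conjugate algebraic dual of $\mathcal{D}_f$; write $\langle f|K|e\rangle$ for the value of $Ke$ at $f\in\mathcal{D}_f$, and $\langle e|K^\dagger|f\rangle=\langle f|K|e\rangle^*$. The representation $\mathcal{Q}(\rho)=\sum_\alpha K_\alpha\rho K_\alpha^\dagger$ means $\langle g|\mathcal{Q}(|\phi\rangle\langle\phi'|)|f\rangle=\sum_\alpha\langle g|K_\alpha|\phi\rangle\langle f|K_\alpha|\phi'\rangle^*$ for $\phi,\phi'\in\mathcal{D}_e$, $f,g\in\mathcal{D}_f$. Complete positivity: $\sum_{k,\ell}\langle\psi_k|\mathcal{Q}(|\phi_k\rangle\langle\phi_\ell|)|\psi_\ell\rangle\ge0$ for all finite families $\phi_k\in\mathcal{D}_e$, $\psi_k\in\mathcal{D}_f$. "$K$ maps $\mathcal{D}_e$ into $\mathcal{H}$" means each functional $Ke$ is of the form $f\mapsto\langle f|v\rangle$ with $v\in\mathcal{H}$. *)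

theory Defs
  imports "HOL-Analysis.Analysis"
begin

text \<open>The separable infinite-dimensional Hilbert space is modelled concretely as
  l2(N): square-summable complex sequences (every such space is unitarily isomorphic to it).
  The inner product is conjugate-linear in the first argument (physics convention).\<close>

definition l2 :: "(nat \<Rightarrow> complex) set" where
  "l2 = {x. summable (\<lambda>n. (cmod (x n))\<^sup>2)}"

definition cinner :: "(nat \<Rightarrow> complex) \<Rightarrow> (nat \<Rightarrow> complex) \<Rightarrow> complex" where
  "cinner x y = (\<Sum>n. cnj (x n) * y n)"

definition l2norm :: "(nat \<Rightarrow> complex) \<Rightarrow> real" where
  "l2norm x = sqrt (\<Sum>n. (cmod (x n))\<^sup>2)"

definition onb :: "(nat \<Rightarrow> (nat \<Rightarrow> complex)) \<Rightarrow> bool" where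
  "onb e \<longleftrightarrow> (\<forall>n. e n \<in> l2)
     \<and> (\<forall>m n. cinner (e m) (e n) = (if m = n then 1 else 0))
     \<and> (\<forall>x\<in>l2. (\<forall>n. cinner (e n) x = 0) \<longrightarrow> x = (\<lambda>_. 0))"

definition fspan :: "(nat \<Rightarrow> (nat \<Rightarrow> complex)) \<Rightarrow> (nat \<Rightarrow> complex) set" where
  "fspan e = {x. \<exists>F c. finite F \<and> x = (\<lambda>i. \<Sum>k\<in>F. c k * e k i)}"

text \<open>Elements of D_e^2 = span of |e_k><e_l| are identified with their (unique) finitely
  supported coefficient matrices r: rho = sum r k l |e_k><e_l|.\<close>
definition finmat :: "(nat \<Rightarrow> nat \<Rightarrow> complex) set" where
  "finmat = {r. finite {(k, l). r k l \<noteq> 0}}"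

text \<open>Coefficient matrix of |phi><phi'| w.r.t. the basis e.\<close>
definition rank1 :: "(nat \<Rightarrow> (nat \<Rightarrow> complex)) \<Rightarrow> (nat \<Rightarrow> complex) \<Rightarrow> (nat \<Rightarrow> complex)
    \<Rightarrow> nat \<Rightarrow> nat \<Rightarrow> complex" where
  "rank1 e \<phi> \<phi>' k l = cinner (e k) \<phi> * cnj (cinner (e l) \<phi>')"

text \<open>Generalized operator from D_e into the conjugate algebraic dual of D_f, written
  K f phi = <f|K|phi>: linear in phi on D_e, conjugate-linear in f on D_f.\<close>
definition gen_op :: "(nat \<Rightarrow> (nat \<Rightarrow> complex)) \<Rightarrow> (nat \<Rightarrow> (nat \<Rightarrow> complex))
    \<Rightarrow> ((nat \<Rightarrow> complex) \<Rightarrow> (nat \<Rightarrow> complex) \<Rightarrow> complex) \<Rightarrow> bool" where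
  "gen_op e f K \<longleftrightarrow>
     (\<forall>g\<in>fspan f. \<forall>\<phi>\<in>fspan e. \<forall>\<psi>\<in>fspan e. \<forall>a b.
        K g (\<lambda>i. a * \<phi> i + b * \<psi> i) = a * K g \<phi> + b * K g \<psi>)
   \<and> (\<forall>\<phi>\<in>fspan e. \<forall>g\<in>fspan f. \<forall>h\<in>fspan f. \<forall>a b.
        K (\<lambda>i. a * g i + b * h i) \<phi> = cnj a * K g \<phi> + cnj b * K h \<phi>)"

definition bounded_op :: "((nat \<Rightarrow> complex) \<Rightarrow> (nat \<Rightarrow> complex)) \<Rightarrow> bool" where
  "bounded_op B \<longleftrightarrow> (\<forall>x\<in>l2. B x \<in> l2)
     \<and> (\<forall>x\<in>l2. \<forall>y\<in>l2. \<forall>a b. B (\<lambda>i. a * x i + b * y i) = (\<lambda>i. a * B x i + b * B y i))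
     \<and> (\<exists>C. \<forall>x\<in>l2. l2norm (B x) \<le> C * l2norm x)"

end

theory Submission
  imports Defs
begin


lemma l2_bound:
  assumes "\<And>I. (\<Sum>i<I. (cmod (x i))\<^sup>2) \<le> C"
  shows "x \<in> l2 \<and> (\<Sum>n. (cmod (x n))\<^sup>2) \<le> C"
proof -
  have s: "summable (\<lambda>n. (cmod (x n))\<^sup>2)"
    apply (rule bounded_imp_summable[where B=C])
     apply simp
    by (metis assms lessThan_Suc_atMost)
  then show ?thesis using suminf_le_const[OF s assms] unfolding l2_def by auto
qed

lemma l2_le_total:
  assumes "x \<in> l2" "finite F" shows "(\<Sum>i\<in>F. (cmod (x i))\<^sup>2) \<le> (\<Sum>n. (cmod (x n))\<^sup>2)"
  using sum_le_suminf[of "\<lambda>n. (cmod (x n))\<^sup>2" F] assms unfolding l2_def by auto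

lemma l2_suminf_nonneg: "x \<in> l2 \<Longrightarrow> 0 \<le> (\<Sum>n. (cmod (x n))\<^sup>2)"
  unfolding l2_def by (auto intro: suminf_nonneg)

lemma l2norm_sq: assumes "x \<in> l2" shows "(l2norm x)\<^sup>2 = (\<Sum>n. (cmod (x n))\<^sup>2)"
  unfolding l2norm_def using l2_suminf_nonneg[OF assms] by simp

lemma l2norm_nonneg: "x \<in> l2 \<Longrightarrow> 0 \<le> l2norm x"
  unfolding l2norm_def by (simp add: l2_suminf_nonneg)

lemma CS:
  assumes x: "x \<in> l2" and y: "y \<in> l2"
  shows "summable (\<lambda>i. cnj (x i) * y i) \<and> cmod (cinner x y) \<le> l2norm x * l2norm y"
proof -
  have b: "(\<Sum>i<I. cmod (cnj (x i) * y i)) \<le> l2norm x * l2norm y" for I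
  proof -
    have "(\<Sum>i<I. cmod (cnj (x i) * y i)) = (\<Sum>i<I. \<bar>cmod (x i)\<bar> * \<bar>cmod (y i)\<bar>)"
      by (simp add: norm_mult)
    also have "\<dots> \<le> L2_set (\<lambda>i. cmod (x i)) {..<I} * L2_set (\<lambda>i. cmod (y i)) {..<I}"
      by (rule L2_set_mult_ineq)
    also have "\<dots> \<le> l2norm x * l2norm y"
      unfolding L2_set_def l2norm_def
      by (intro mult_mono real_sqrt_le_mono l2_le_total x y real_sqrt_ge_zero l2_suminf_nonneg sum_nonneg) auto
    finally show ?thesis .
  qed
  have s: "summable (\<lambda>i. cmod (cnj (x i) * y i))"
    apply (rule bounded_imp_summable[where B="l2norm x * l2norm y"])
     apply simp
    by (metis b lessThan_Suc_atMost)
  have "cmod (cinner x y) \<le> (\<Sum>i. cmod (cnj (x i) * y i))"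
    unfolding cinner_def by (rule summable_norm[OF s])
  also have "\<dots> \<le> l2norm x * l2norm y" by (rule suminf_le_const[OF s b])
  finally show ?thesis using summable_norm_cancel[OF s] by auto
qed

lemma sq_bound: "(p + q)\<^sup>2 \<le> 2 * p\<^sup>2 + 2 * (q::real)\<^sup>2"
proof -
  have "0 \<le> (p - q)\<^sup>2" by simp
  then show ?thesis by (simp add: power2_eq_square algebra_simps)
qed

lemma l2_lin:
  assumes x: "x \<in> l2" and y: "y \<in> l2"
  shows "(\<lambda>i. a * x i + b * y i) \<in> l2"
proof -
  have S: "summable (\<lambda>i. 2 * (cmod a)\<^sup>2 * (cmod (x i))\<^sup>2 + 2 * (cmod b)\<^sup>2 * (cmod (y i))\<^sup>2)"
    by (rule summable_add; rule summable_mult) (use x y in \<open>auto simp: l2_def\<close>)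
  have N: "norm ((cmod (a * x i + b * y i))\<^sup>2) \<le> 2 * (cmod a)\<^sup>2 * (cmod (x i))\<^sup>2 + 2 * (cmod b)\<^sup>2 * (cmod (y i))\<^sup>2" for i
  proof -
    have t: "cmod (a * x i + b * y i) \<le> cmod a * cmod (x i) + cmod b * cmod (y i)"
      by (metis norm_mult norm_triangle_ineq)
    have "(cmod (a * x i + b * y i))\<^sup>2 \<le> (cmod a * cmod (x i) + cmod b * cmod (y i))\<^sup>2"
      using t by (intro power_mono) auto
    also have "\<dots> \<le> 2 * (cmod a * cmod (x i))\<^sup>2 + 2 * (cmod b * cmod (y i))\<^sup>2"
      by (rule sq_bound)
    finally show ?thesis by (simp add: power_mult_distrib)
  qed
  have E: "\<exists>N. \<forall>n\<ge>N. norm ((cmod (a * x n + b * y n))\<^sup>2) \<le> 2 * (cmod a)\<^sup>2 * (cmod (x n))\<^sup>2 + 2 * (cmod b)\<^sup>2 * (cmod (y n))\<^sup>2"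
    using N by blast
  show ?thesis unfolding l2_def mem_Collect_eq
    by (rule summable_comparison_test[OF E S])
qed

lemma cinner_lin2:
  assumes x: "x \<in> l2" and y: "y \<in> l2" and z: "z \<in> l2"
  shows "cinner x (\<lambda>i. a * y i + b * z i) = a * cinner x y + b * cinner x z"
proof -
  have sy: "summable (\<lambda>i. cnj (x i) * y i)" and sz: "summable (\<lambda>i. cnj (x i) * z i)"
    using CS x y z by auto
  have "cinner x (\<lambda>i. a * y i + b * z i) = (\<Sum>i. a * (cnj (x i) * y i) + b * (cnj (x i) * z i))"
    unfolding cinner_def by (simp add: algebra_simps)
  also have "\<dots> = (\<Sum>i. a * (cnj (x i) * y i)) + (\<Sum>i. b * (cnj (x i) * z i))"
    by (rule suminf_add[symmetric, OF summable_mult[OF sy] summable_mult[OF sz]])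
  also have "\<dots> = a * cinner x y + b * cinner x z"
    unfolding cinner_def by (simp add: suminf_mult sy sz)
  finally show ?thesis .
qed

lemma cinner_cnj: "x \<in> l2 \<Longrightarrow> y \<in> l2 \<Longrightarrow> cinner y x = cnj (cinner x y)"
proof -
  assume x: "x \<in> l2" and y: "y \<in> l2"
  have s: "summable (\<lambda>i. cnj (x i) * y i)" using CS[OF x y] by auto
  have "cnj (cinner x y) = (\<Sum>i. cnj (cnj (x i) * y i))"
    unfolding cinner_def by (rule bounded_linear.suminf[OF bounded_linear_cnj s])
  also have "\<dots> = cinner y x" unfolding cinner_def by (simp add: mult.commute)
  finally show ?thesis by simp
qed

lemma cinner_lin1:
  assumes x: "x \<in> l2" and y: "y \<in> l2" and z: "z \<in> l2"
  shows "cinner (\<lambda>i. a * y i + b * z i) x = cnj a * cinner y x + cnj b * cinner z x"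
proof -
  have "cinner (\<lambda>i. a * y i + b * z i) x = cnj (cinner x (\<lambda>i. a * y i + b * z i))"
    by (rule cinner_cnj[OF x l2_lin[OF y z]])
  also have "\<dots> = cnj (a * cinner x y + b * cinner x z)" by (simp only: cinner_lin2[OF x y z])
  also have "\<dots> = cnj a * cnj (cinner x y) + cnj b * cnj (cinner x z)" by simp
  also have "\<dots> = cnj a * cinner y x + cnj b * cinner z x"
    by (simp only: cinner_cnj[OF x y, symmetric] cinner_cnj[OF x z, symmetric])
  finally show ?thesis .
qed



lemma zero_l2: "(\<lambda>i. 0) \<in> l2" unfolding l2_def by simp

lemma cinner_zero2: "cinner x (\<lambda>i. 0) = 0" unfolding cinner_def by simp
lemma cinner_zero1: "cinner (\<lambda>i. 0) x = 0" unfolding cinner_def by simp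

lemma fsum_l2:
  assumes "finite F" "\<forall>k\<in>F. u k \<in> l2"
  shows "(\<lambda>i. \<Sum>k\<in>F. c k * u k i) \<in> l2 \<and>
    (\<forall>x\<in>l2. cinner x (\<lambda>i. \<Sum>k\<in>F. c k * u k i) = (\<Sum>k\<in>F. c k * cinner x (u k))
           \<and> cinner (\<lambda>i. \<Sum>k\<in>F. c k * u k i) x = (\<Sum>k\<in>F. cnj (c k) * cinner (u k) x))"
  using assms
proof (induction F rule: finite_induct)
  case empty
  then show ?case by (simp add: zero_l2 cinner_zero1 cinner_zero2)
next
  case (insert k F)
  let ?S = "\<lambda>i. \<Sum>k\<in>F. c k * u k i"
  have IH: "?S \<in> l2" "\<And>x. x \<in> l2 \<Longrightarrow> cinner x ?S = (\<Sum>k\<in>F. c k * cinner x (u k))"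
     "\<And>x. x \<in> l2 \<Longrightarrow> cinner ?S x = (\<Sum>k\<in>F. cnj (c k) * cinner (u k) x)"
    using insert by auto
  have uk: "u k \<in> l2" using insert by auto
  have eq: "(\<lambda>i. \<Sum>k\<in>insert k F. c k * u k i) = (\<lambda>i. c k * u k i + 1 * ?S i)"
    using insert by simp
  show ?case unfolding eq
    using l2_lin[OF uk IH(1), where a="c k" and b=1] cinner_lin2[OF _ uk IH(1), where a="c k" and b=1]
      cinner_lin1[OF _ uk IH(1), where a="c k" and b=1] IH insert
    by simp
qed

lemma onb_l2: "onb f \<Longrightarrow> f n \<in> l2" unfolding onb_def by auto
lemma onb_inner: "onb f \<Longrightarrow> cinner (f m) (f n) = (if m = n then 1 else 0)" unfolding onb_def by auto

lemma ortho_sum: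
  assumes "onb f" "finite F"
  shows "cinner (f m) (\<lambda>i. \<Sum>k\<in>F. c k * f k i) = (if m \<in> F then c m else 0)"
proof -
  have "cinner (f m) (\<lambda>i. \<Sum>k\<in>F. c k * f k i) = (\<Sum>k\<in>F. c k * cinner (f m) (f k))"
    using fsum_l2[OF assms(2), of f c] onb_l2[OF assms(1)] by auto
  also have "\<dots> = (\<Sum>k\<in>F. if m = k then c k else 0)"
    by (rule sum.cong) (auto simp: onb_inner[OF assms(1)])
  also have "\<dots> = (if m \<in> F then c m else 0)" using assms(2) by simp
  finally show ?thesis .
qed

lemma cinner_self:
  assumes "x \<in> l2" shows "cinner x x = of_real (\<Sum>n. (cmod (x n))\<^sup>2)"
proof -
  have s: "summable (\<lambda>n. (cmod (x n))\<^sup>2)" using assms unfolding l2_def by auto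
  have "cinner x x = (\<Sum>n. complex_of_real ((cmod (x n))\<^sup>2))"
    unfolding cinner_def complex_norm_square by (simp add: mult.commute)
  also have "\<dots> = of_real (\<Sum>n. (cmod (x n))\<^sup>2)"
    by (rule suminf_of_real[OF s, symmetric])
  finally show ?thesis .
qed

lemma norm_fsum:
  assumes "onb f" "finite F"
  shows "(l2norm (\<lambda>i. \<Sum>k\<in>F. c k * f k i))\<^sup>2 = (\<Sum>k\<in>F. (cmod (c k))\<^sup>2)"
proof -
  let ?S = "\<lambda>i. \<Sum>k\<in>F. c k * f k i"
  have H: "?S \<in> l2 \<and> (\<forall>x\<in>l2. cinner x ?S = (\<Sum>k\<in>F. c k * cinner x (f k))
           \<and> cinner ?S x = (\<Sum>k\<in>F. cnj (c k) * cinner (f k) x))"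
    using fsum_l2[OF assms(2), of f c] onb_l2[OF assms(1)] by auto
  then have S: "?S \<in> l2" by blast
  have ci: "cinner ?S ?S = (\<Sum>k\<in>F. cnj (c k) * cinner (f k) ?S)" using H S by blast
  have "cinner ?S ?S = (\<Sum>k\<in>F. cnj (c k) * c k)"
    unfolding ci by (rule sum.cong) (auto simp: ortho_sum[OF assms])
  also have "\<dots> = of_real (\<Sum>k\<in>F. (cmod (c k))\<^sup>2)"
    by (simp only: of_real_sum complex_norm_square mult.commute)
  finally have "of_real ((l2norm ?S)\<^sup>2) = (of_real (\<Sum>k\<in>F. (cmod (c k))\<^sup>2) :: complex)"
    using cinner_self[OF S] l2norm_sq[OF S] by simp
  then show ?thesis using of_real_eq_iff by blast
qed

lemma pointwise_le:
  assumes "x \<in> l2" shows "cmod (x i) \<le> l2norm x"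
proof -
  have "(cmod (x i))\<^sup>2 \<le> (\<Sum>n. (cmod (x n))\<^sup>2)"
    using l2_le_total[OF assms, of "{i}"] by simp
  then have "sqrt ((cmod (x i))\<^sup>2) \<le> l2norm x" unfolding l2norm_def by (rule real_sqrt_le_mono)
  then show ?thesis by simp
qed



lemma synth:
  assumes f: "onb f" and c: "c \<in> l2"
  shows "\<exists>v\<in>l2. \<forall>m. cinner (f m) v = c m"
proof -
  define tot where "tot = (\<Sum>n. (cmod (c n))\<^sup>2)"
  have sc: "summable (\<lambda>n. (cmod (c n))\<^sup>2)" using c unfolding l2_def by auto
  define T where "T N = tot - (\<Sum>n<N. (cmod (c n))\<^sup>2)" for N
  have T0: "T \<longlonglongrightarrow> 0"
  proof -
    have "(\<lambda>N. tot - (\<Sum>n<N. (cmod (c n))\<^sup>2)) \<longlonglongrightarrow> tot - tot"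
      unfolding tot_def by (intro tendsto_diff tendsto_const summable_LIMSEQ[OF sc])
    then show ?thesis unfolding T_def by simp
  qed
  define S where "S N = (\<lambda>i. \<Sum>k<N. c k * f k i)" for N
  have fl2: "\<forall>k\<in>F. f k \<in> l2" for F using onb_l2[OF f] by auto
  have Dnorm: "(l2norm (\<lambda>i. \<Sum>k\<in>{N..<M}. c k * f k i))\<^sup>2 \<le> T N" if "N \<le> M" for N M
  proof -
    have "(\<Sum>k\<in>{N..<M}. (cmod (c k))\<^sup>2) = (\<Sum>k<M. (cmod (c k))\<^sup>2) - (\<Sum>k<N. (cmod (c k))\<^sup>2)"
      using sum_diff_nat_ivl[of 0 N M "\<lambda>k. (cmod (c k))\<^sup>2"] that by (simp add: atLeast0LessThan)
    also have "\<dots> \<le> T N" unfolding T_def tot_def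
      using sum_le_suminf[OF sc, of "{..<M}"] by simp
    finally show ?thesis using norm_fsum[OF f, of "{N..<M}" c] by simp
  qed
  have SD: "(\<lambda>i. S M i - S N i) = (\<lambda>i. \<Sum>k\<in>{N..<M}. c k * f k i)" if "N \<le> M" for N M
  proof (rule ext)
    fix i show "S M i - S N i = (\<Sum>k\<in>{N..<M}. c k * f k i)"
      unfolding S_def using sum_diff_nat_ivl[of 0 N M "\<lambda>k. c k * f k i"] that by (simp add: atLeast0LessThan)
  qed
  have summ: "summable (\<lambda>k. c k * f k i)" for i
    unfolding summable_Cauchy
  proof (intro allI impI)
    fix e :: real assume e: "0 < e"
    then have "e\<^sup>2 > 0" by simp
    then obtain N where N: "\<forall>m\<ge>N. \<forall>n. norm (\<Sum>k\<in>{m..<n}. (cmod (c k))\<^sup>2) < e\<^sup>2"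
      using sc unfolding summable_Cauchy by blast
    have "norm (\<Sum>k\<in>{m..<n}. c k * f k i) < e" if "m \<ge> N" for m n
    proof -
      let ?x = "\<lambda>i. \<Sum>k\<in>{m..<n}. c k * f k i"
      have xl: "?x \<in> l2" using fsum_l2[of "{m..<n}" f c] fl2 by auto
      have "(l2norm ?x)\<^sup>2 = (\<Sum>k\<in>{m..<n}. (cmod (c k))\<^sup>2)" by (rule norm_fsum[OF f]) simp
      also have "\<dots> < e\<^sup>2" using N that by (simp add: sum_nonneg)
      finally have "l2norm ?x < e"
        using l2norm_nonneg[OF xl] e by (simp add: power_less_imp_less_base)
      then show ?thesis using pointwise_le[OF xl, of i] by simp
    qed
    then show "\<exists>N. \<forall>m\<ge>N. \<forall>n. norm (\<Sum>k\<in>{m..<n}. c k * f k i) < e" by blast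
  qed
  define v where "v i = (\<Sum>k. c k * f k i)" for i
  have Sv: "(\<lambda>M. S M i) \<longlonglongrightarrow> v i" for i
    unfolding S_def v_def by (rule summable_LIMSEQ[OF summ])
  define w where "w N = (\<lambda>i. v i - S N i)" for N
  have wb: "w N \<in> l2 \<and> (\<Sum>n. (cmod (w N n))\<^sup>2) \<le> T N" for N
  proof (rule l2_bound)
    fix I
    have lim: "(\<lambda>M. \<Sum>i<I. (cmod (S M i - S N i))\<^sup>2) \<longlonglongrightarrow> (\<Sum>i<I. (cmod (w N i))\<^sup>2)"
      unfolding w_def by (intro tendsto_intros Sv)
    have "(\<Sum>i<I. (cmod (S M i - S N i))\<^sup>2) \<le> T N" if "M \<ge> N" for M
    proof -
      let ?x = "\<lambda>i. \<Sum>k\<in>{N..<M}. c k * f k i"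
      have xl: "?x \<in> l2" using fsum_l2[of "{N..<M}" f c] fl2 by auto
      have "(\<Sum>i<I. (cmod (S M i - S N i))\<^sup>2) = (\<Sum>i<I. (cmod (?x i))\<^sup>2)"
        using fun_cong[OF SD[OF that]] by simp
      also have "\<dots> \<le> (l2norm ?x)\<^sup>2" using l2_le_total[OF xl] l2norm_sq[OF xl] by simp
      also have "\<dots> \<le> T N" by (rule Dnorm[OF that])
      finally show ?thesis .
    qed
    then show "(\<Sum>i<I. (cmod (w N i))\<^sup>2) \<le> T N"
      by (intro LIMSEQ_le_const2[OF lim]) blast
  qed
  have vl2: "v \<in> l2" using wb[of 0] unfolding w_def S_def by simp
  have "cinner (f m) v = c m" for m
  proof -
    have bnd: "cmod (cinner (f m) v - c m) \<le> sqrt (T N)" if "N \<ge> Suc m" for N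
    proof -
      have wl: "w N \<in> l2" using wb by blast
      have Sl: "S N \<in> l2" unfolding S_def using fsum_l2[of "{..<N}" f c] fl2 by auto
      have veq: "v = (\<lambda>i. 1 * S N i + 1 * w N i)" unfolding w_def by simp
      have "cinner (f m) v = cinner (f m) (S N) + cinner (f m) (w N)"
        using cinner_lin2[OF onb_l2[OF f] Sl wl, where a=1 and b=1] veq by simp
      also have "cinner (f m) (S N) = c m" unfolding S_def using ortho_sum[OF f, of "{..<N}"] that by simp
      finally have d: "cinner (f m) v - c m = cinner (f m) (w N)" by simp
      have n1: "l2norm (f m) = 1"
      proof -
        have "of_real ((l2norm (f m))\<^sup>2) = (1::complex)"
          using cinner_self[OF onb_l2[OF f]] l2norm_sq[OF onb_l2[OF f]] onb_inner[OF f, of m m] by simp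
        then have "(l2norm (f m))\<^sup>2 = 1" by (metis of_real_eq_1_iff)
        then show ?thesis using l2norm_nonneg[OF onb_l2[OF f, of m]] by (auto simp: power2_eq_1_iff)
      qed
      have "cmod (cinner (f m) (w N)) \<le> l2norm (w N)" using CS[OF onb_l2[OF f, of m] wl] n1 by simp
      also have "\<dots> \<le> sqrt (T N)" unfolding l2norm_def using wb by (simp add: real_sqrt_le_mono)
      finally show ?thesis using d by simp
    qed
    have "(\<lambda>N. sqrt (T N)) \<longlonglongrightarrow> sqrt 0" by (intro tendsto_intros T0)
    then have "cmod (cinner (f m) v - c m) \<le> 0"
      by (intro LIMSEQ_le_const[where X="\<lambda>N. sqrt (T N)"]) (use bnd in auto)
    then show ?thesis by simp
  qed
  then show ?thesis using vl2 by blast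
qed



lemma Kconj:
  assumes K: "gen_op e f K" and phi: "\<phi> \<in> fspan e" and F: "finite F"
  shows "K (\<lambda>i. \<Sum>k\<in>F. d k * f k i) \<phi> = (\<Sum>k\<in>F. cnj (d k) * K (f k) \<phi>)"
proof -
  have lin: "\<And>g h a b. g \<in> fspan f \<Longrightarrow> h \<in> fspan f \<Longrightarrow>
      K (\<lambda>i. a * g i + b * h i) \<phi> = cnj a * K g \<phi> + cnj b * K h \<phi>"
    using K phi unfolding gen_op_def by blast
  have sp: "(\<lambda>i. \<Sum>k\<in>G. d' k * f k i) \<in> fspan f" if "finite G" for G d'
    unfolding fspan_def using that by blast
  have fk: "f k \<in> fspan f" for k
    using sp[of "{k}" "\<lambda>_. 1"] by simp
  show ?thesis using F
  proof (induction F rule: finite_induct)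
    case empty
    have z: "(\<lambda>i. \<Sum>k\<in>{}. d k * f k i) \<in> fspan f" by (rule sp) simp
    have "K (\<lambda>i. 0 * (\<Sum>k\<in>{}. d k * f k i) + 0 * (\<Sum>k\<in>{}. d k * f k i)) \<phi> = 0"
      using lin[OF z z, of 0 0] by simp
    then show ?case by simp
  next
    case (insert k F)
    have eq: "(\<lambda>i. \<Sum>k\<in>insert k F. d k * f k i) = (\<lambda>i. d k * f k i + 1 * (\<Sum>k\<in>F. d k * f k i))"
      using insert by simp
    show ?case unfolding eq using lin[OF fk[of k] sp[OF insert(1), of d], where a="d k" and b=1] insert by simp
  qed
qed

lemma rank1_finmat:
  assumes e: "onb e" and phi: "\<phi> \<in> fspan e"
  shows "rank1 e \<phi> \<phi> \<in> finmat"
proof -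
  obtain G a where G: "finite G" and pe: "\<phi> = (\<lambda>i. \<Sum>k\<in>G. a k * e k i)"
    using phi unfolding fspan_def by blast
  have ci: "cinner (e k) \<phi> = (if k \<in> G then a k else 0)" for k
    unfolding pe by (rule ortho_sum[OF e G])
  have "{(k, l). rank1 e \<phi> \<phi> k l \<noteq> 0} \<subseteq> G \<times> G"
    unfolding rank1_def ci by auto
  then show ?thesis unfolding finmat_def mem_Collect_eq using G by (meson finite_SigmaI finite_subset)
qed

theorem corollary6p4:
  fixes e f :: "nat \<Rightarrow> (nat \<Rightarrow> complex)"
    and A :: "nat set"
    and K :: "nat \<Rightarrow> (nat \<Rightarrow> complex) \<Rightarrow> (nat \<Rightarrow> complex) \<Rightarrow> complex"
    and Q :: "(nat \<Rightarrow> nat \<Rightarrow> complex) \<Rightarrow> (nat \<Rightarrow> complex) \<Rightarrow> (nat \<Rightarrow> complex) \<Rightarrow> complex"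
  assumes onb_e: "onb e" and onb_f: "onb f"
    and K_gen: "\<forall>\<alpha>\<in>A. gen_op e f (K \<alpha>)"
    and Q_linear: "\<forall>r\<in>finmat. \<forall>s\<in>finmat. \<forall>a b. \<forall>g\<in>fspan f. \<forall>h\<in>fspan f.
        Q (\<lambda>k l. a * r k l + b * s k l) g h = a * Q r g h + b * Q s g h"
    and Q_sesq: "\<forall>r\<in>finmat. \<forall>g\<in>fspan f. \<forall>g'\<in>fspan f. \<forall>h\<in>fspan f. \<forall>a b.
        Q r (\<lambda>i. a * g i + b * g' i) h = cnj a * Q r g h + cnj b * Q r g' h
      \<and> Q r h (\<lambda>i. a * g i + b * g' i) = a * Q r h g + b * Q r h g'"
    and Q_repr: "\<forall>\<phi>\<in>fspan e. \<forall>\<phi>'\<in>fspan e. \<forall>g\<in>fspan f. \<forall>h\<in>fspan f.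
        ((\<lambda>\<alpha>. K \<alpha> g \<phi> * cnj (K \<alpha> h \<phi>')) has_sum Q (rank1 e \<phi> \<phi>') g h) A"
    and Q_cp: "\<forall>n::nat. \<forall>\<phi> \<psi>. (\<forall>k<n. \<phi> k \<in> fspan e \<and> \<psi> k \<in> fspan f) \<longrightarrow>
        (let s = (\<Sum>k<n. \<Sum>l<n. Q (rank1 e (\<phi> k) (\<phi> l)) (\<psi> k) (\<psi> l))
         in Im s = 0 \<and> 0 \<le> Re s)"
    and Q_bounded: "\<forall>r\<in>finmat. \<exists>B. bounded_op B \<and>
        (\<forall>g\<in>fspan f. \<forall>h\<in>fspan f. Q r g h = cinner g (B h))"
  shows "\<forall>\<alpha>\<in>A. \<forall>\<phi>\<in>fspan e. \<exists>v\<in>l2. \<forall>g\<in>fspan f. K \<alpha> g \<phi> = cinner g v"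
proof (intro ballI)
  fix \<alpha> \<phi> assume al: "\<alpha> \<in> A" and phi: "\<phi> \<in> fspan e"
  have K: "gen_op e f (K \<alpha>)" using K_gen al by blast
  define c where "c n = K \<alpha> (f n) \<phi>" for n
  define r where "r = rank1 e \<phi> \<phi>"
  have rf: "r \<in> finmat" unfolding r_def by (rule rank1_finmat[OF onb_e phi])
  obtain B where Bb: "bounded_op B" and QB: "\<forall>g\<in>fspan f. \<forall>h\<in>fspan f. Q r g h = cinner g (B h)"
    using Q_bounded rf by blast
  obtain C where BC: "\<forall>x\<in>l2. l2norm (B x) \<le> C * l2norm x" and Bl: "\<forall>x\<in>l2. B x \<in> l2"
    using Bb unfolding bounded_op_def by blast
  have sp: "(\<lambda>i. \<Sum>k\<in>G. d' k * f k i) \<in> fspan f" if "finite G" for G d'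
    unfolding fspan_def using that by blast
  have fl2: "\<forall>k\<in>G. f k \<in> l2" for G using onb_l2[OF onb_f] by auto
  have bound: "(\<Sum>n<N. (cmod (c n))\<^sup>2) \<le> max C 0" for N
  proof -
    define s where "s = (\<Sum>n<N. (cmod (c n))\<^sup>2)"
    define g where "g = (\<lambda>i. \<Sum>n<N. c n * f n i)"
    have gs: "g \<in> fspan f" unfolding g_def by (rule sp) simp
    have gl: "g \<in> l2" unfolding g_def using fsum_l2[of "{..<N}" f c] fl2 by auto
    have Kg: "K \<alpha> g \<phi> = of_real s"
    proof -
      have "K \<alpha> g \<phi> = (\<Sum>n<N. cnj (c n) * c n)"
        unfolding g_def using Kconj[OF K phi, of "{..<N}" c] by (simp add: c_def)
      also have "\<dots> = of_real s" unfolding s_def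
        by (simp only: of_real_sum complex_norm_square mult.commute)
      finally show ?thesis .
    qed
    have hs: "((\<lambda>\<beta>. K \<beta> g \<phi> * cnj (K \<beta> g \<phi>)) has_sum Q r g g) A"
      using Q_repr phi gs unfolding r_def by blast
    have hsR: "((\<lambda>\<beta>. (cmod (K \<beta> g \<phi>))\<^sup>2) has_sum Re (Q r g g)) A"
      using has_sum_Re[OF hs] by (simp add: complex_norm_square[symmetric] del: of_real_power)
    have h1: "((\<lambda>\<beta>. (cmod (K \<beta> g \<phi>))\<^sup>2) has_sum (cmod (K \<alpha> g \<phi>))\<^sup>2) {\<alpha>}"
      using has_sum_finite[of "{\<alpha>}" "\<lambda>\<beta>. (cmod (K \<beta> g \<phi>))\<^sup>2"] by simp
    have "(cmod (K \<alpha> g \<phi>))\<^sup>2 \<le> Re (Q r g g)"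
      by (rule has_sum_mono_neutral[OF h1 hsR]) (use al in auto)
    also have "\<dots> \<le> cmod (Q r g g)" by (rule complex_Re_le_cmod)
    also have "\<dots> = cmod (cinner g (B g))" using QB gs by simp
    also have "\<dots> \<le> l2norm g * l2norm (B g)" using CS[OF gl] Bl gl by blast
    also have "\<dots> \<le> l2norm g * (C * l2norm g)"
      by (rule mult_left_mono) (use BC gl l2norm_nonneg[OF gl] in auto)
    also have "\<dots> = C * (l2norm g)\<^sup>2" by (simp add: power2_eq_square)
    also have "(l2norm g)\<^sup>2 = s" unfolding g_def s_def by (rule norm_fsum[OF onb_f]) simp
    finally have ss: "s * s \<le> C * s" using Kg by (simp add: power2_eq_square)
    have s0: "0 \<le> s" unfolding s_def by (simp add: sum_nonneg)
    show ?thesis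
    proof (cases "s = 0")
      case True then show ?thesis unfolding s_def by simp
    next
      case False
      then have "s > 0" using s0 by simp
      then have "s \<le> C" using ss by simp
      then show ?thesis unfolding s_def by simp
    qed
  qed
  have cl2: "c \<in> l2" using l2_bound[OF bound] by blast
  obtain v where vl: "v \<in> l2" and vc: "\<forall>m. cinner (f m) v = c m"
    using synth[OF onb_f cl2] by blast
  have "K \<alpha> g \<phi> = cinner g v" if g: "g \<in> fspan f" for g
  proof -
    obtain G d where G: "finite G" and ge: "g = (\<lambda>i. \<Sum>k\<in>G. d k * f k i)"
      using g unfolding fspan_def by blast
    have "K \<alpha> g \<phi> = (\<Sum>k\<in>G. cnj (d k) * c k)"
      unfolding ge using Kconj[OF K phi G] by (simp add: c_def)
    also have "\<dots> = (\<Sum>k\<in>G. cnj (d k) * cinner (f k) v)" using vc by simp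
    also have "\<dots> = cinner g v" unfolding ge using fsum_l2[OF G, of f d] fl2 vl by auto
    finally show ?thesis .
  qed
  then show "\<exists>v\<in>l2. \<forall>g\<in>fspan f. K \<alpha> g \<phi> = cinner g v" using vl by blast
qed

end
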